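(* Let $G=\bigl((f_j)_{j=1}^n;(\mu^{R})_{\emptyset\ne R\subseteq[n]}\bigr)$ be an $n$-resource selection game with $f_1,\ldots,f_n$ continuous, and let $S\subseteq[n]$. Then for every $j\in[n]\setminus S$, $h_j(G-S)\ge h_j(G)$.
   Context: An $n$-resource selection game is $G=\bigl((f_j)_{j=1}^n;(\mu^{R})_{\emptyset\ne R\subseteq[n]}\bigr)$ with each $f_j:[0,\infty)\to\mathbb{R}$ nondecreasing and each $\mu^R\ge0$ (games on a general finite resource set are defined analogously). A consumption profile assigns to each nonempty $R$ a vector $s(R)\ge0$ supported on $R$ with total $\mu^R$; loads $\mu^s_j=\sum_R s_j(R)$, costs $h^s_j=f_j(\mu^s_j)$; $s$ is a Nash equilibrium if for every $R$, every $k$ with $s_k(R)>0$ and every $j\in R$, $h^s_k\le h^s_j$. When all $f_j$ are continuous, a Nash equilibrium exists and every Nash equilibrium gives resource $j$ the same cost; $h_j(G)$ denotes this common value. Resource removal: for $S\subsetneq[n]$, $G-S$ is the game with resources $[n]\setminus S$, cost functions $(f_j)_{j\notin S}$, and mass $\sum_{R:\,R\setminus S=R'}\mu^R$ for each nonempty $R'\subseteq[n]\setminus S$ (players who can use only resources in $S$ are removed); $G-\emptyset=G$. *)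

theory Defs
  imports "HOL-Analysis.Analysis"
begin

text \<open>A resource selection game on a finite resource set E (resources are naturals) is given
by cost functions f :: nat \<Rightarrow> real \<Rightarrow> real (f j is the cost function of resource j) and
masses mu :: nat set \<Rightarrow> real (mu R is the mass of players who may use exactly the resources R,
for nonempty R \<subseteq> E). Values of f, mu outside E / outside the nonempty subsets of E are irrelevant.\<close>

definition players :: "nat set \<Rightarrow> nat set set" where
  "players E = {R. R \<subseteq> E \<and> R \<noteq> {}}"

definition is_game :: "nat set \<Rightarrow> (nat \<Rightarrow> real \<Rightarrow> real) \<Rightarrow> (nat set \<Rightarrow> real) \<Rightarrow> bool" where
  "is_game E f mu \<longleftrightarrow> finite E \<and> (\<forall>j\<in>E. mono_on {0..} (f j)) \<and> (\<forall>R\<in>players E. mu R \<ge> 0)"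

definition consumption_profile ::
  "nat set \<Rightarrow> (nat set \<Rightarrow> real) \<Rightarrow> (nat set \<Rightarrow> nat \<Rightarrow> real) \<Rightarrow> bool" where
  "consumption_profile E mu s \<longleftrightarrow>
     (\<forall>R\<in>players E. (\<forall>j. s R j \<ge> 0) \<and> (\<forall>j. j \<notin> R \<longrightarrow> s R j = 0) \<and> (\<Sum>j\<in>R. s R j) = mu R)"

definition load :: "nat set \<Rightarrow> (nat set \<Rightarrow> nat \<Rightarrow> real) \<Rightarrow> nat \<Rightarrow> real" where
  "load E s j = (\<Sum>R\<in>players E. s R j)"

definition cost :: "nat set \<Rightarrow> (nat \<Rightarrow> real \<Rightarrow> real) \<Rightarrow> (nat set \<Rightarrow> nat \<Rightarrow> real) \<Rightarrow> nat \<Rightarrow> real" where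
  "cost E f s j = f j (load E s j)"

definition nash ::
  "nat set \<Rightarrow> (nat \<Rightarrow> real \<Rightarrow> real) \<Rightarrow> (nat set \<Rightarrow> real) \<Rightarrow> (nat set \<Rightarrow> nat \<Rightarrow> real) \<Rightarrow> bool" where
  "nash E f mu s \<longleftrightarrow> consumption_profile E mu s \<and>
     (\<forall>R\<in>players E. \<forall>k\<in>R. \<forall>j\<in>R. s R k > 0 \<longrightarrow> cost E f s k \<le> cost E f s j)"

text \<open>h_j(G): the common cost of resource j at every Nash equilibrium.\<close>
definition eq_cost :: "nat set \<Rightarrow> (nat \<Rightarrow> real \<Rightarrow> real) \<Rightarrow> (nat set \<Rightarrow> real) \<Rightarrow> nat \<Rightarrow> real" where
  "eq_cost E f mu j = (THE c. \<exists>s. nash E f mu s \<and> c = cost E f s j)"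

text \<open>Resource removal G - S: resources E - S, same cost functions, and mass of R' equal to
the total mass of the R with R - S = R'.\<close>
definition removed_mass :: "nat set \<Rightarrow> nat set \<Rightarrow> (nat set \<Rightarrow> real) \<Rightarrow> nat set \<Rightarrow> real" where
  "removed_mass E S mu R' = (\<Sum>R\<in>{R\<in>players E. R - S = R'}. mu R)"

end

theory Submission imports Defs "HOL-Analysis.Analysis" begin


lemma players_finite: "finite E \<Longrightarrow> finite (players E)"
  unfolding players_def by (rule finite_subset[of _ "Pow E"]) auto

lemma load_nonneg: "consumption_profile E mu s \<Longrightarrow> load E s j \<ge> 0"
  unfolding load_def consumption_profile_def by (auto intro: sum_nonneg)

lemma key:
  assumes fin: "finite E" and mono: "\<forall>j\<in>E. mono_on {0..} (f j)"
    and s: "nash E f mu s" and t: "nash (E - S) f (removed_mass E S mu) t"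
    and jE: "j \<in> E - S"
  shows "cost E f s j \<le> cost (E - S) f t j"
proof (rule ccontr)
  assume nj: "\<not> ?thesis"
  define E' where "E' = E - S"
  define mu' where "mu' = removed_mass E S mu"
  define P where "P = players E"
  define P' where "P' = players E'"
  have finP: "finite P" using fin players_finite P_def by auto
  have finP': "finite P'" using fin players_finite P'_def E'_def by auto
  have sc: "consumption_profile E mu s" and sn: "\<forall>R\<in>P. \<forall>k\<in>R. \<forall>i\<in>R. s R k > 0 \<longrightarrow> cost E f s k \<le> cost E f s i"
    using s unfolding nash_def P_def by auto
  have tc: "consumption_profile E' mu' t" and tn: "\<forall>R\<in>P'. \<forall>k\<in>R. \<forall>i\<in>R. t R k > 0 \<longrightarrow> cost E' f t k \<le> cost E' f t i"
    using t unfolding nash_def P'_def E'_def mu'_def by auto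
  define A where "A = {i\<in>E'. cost E' f t i < cost E f s i}"
  have jA: "j \<in> A" using nj jE unfolding A_def E'_def by auto
  have finA: "finite A" using fin unfolding A_def E'_def by auto
  have AE: "A \<subseteq> E'" unfolding A_def by auto
  have loadlt: "load E' t i < load E s i" if "i \<in> A" for i
  proof (rule ccontr)
    assume "\<not> load E' t i < load E s i"
    hence "load E s i \<le> load E' t i" by simp
    moreover have "i \<in> E" using that AE E'_def by auto
    ultimately have "f i (load E s i) \<le> f i (load E' t i)"
      using mono load_nonneg[OF sc] load_nonneg[OF tc] by (auto intro: mono_onD)
    thus False using that unfolding A_def cost_def by auto
  qed
  have lt: "(\<Sum>i\<in>A. load E' t i) < (\<Sum>i\<in>A. load E s i)"
    by (rule sum_strict_mono_ex1) (use finA jA loadlt in \<open>auto intro: less_imp_le\<close>)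
  have s_swap: "(\<Sum>i\<in>A. load E s i) = (\<Sum>R\<in>P. \<Sum>i\<in>A. s R i)"
    unfolding load_def P_def by (rule sum.swap)
  have t_swap: "(\<Sum>i\<in>A. load E' t i) = (\<Sum>R\<in>P'. \<Sum>i\<in>A. t R i)"
    unfolding load_def P'_def by (rule sum.swap)
  have img: "(\<lambda>R. R - S) ` P \<subseteq> insert {} P'"
    unfolding P_def P'_def players_def E'_def by auto
  have grp: "(\<Sum>R'\<in>insert {} P'. \<Sum>R\<in>{R\<in>P. R - S = R'}. \<Sum>i\<in>A. s R i) = (\<Sum>R\<in>P. \<Sum>i\<in>A. s R i)"
    by (rule sum.group[OF finP _ img]) (use finP' in auto)
  have zero: "(\<Sum>R\<in>{R\<in>P. R - S = {}}. \<Sum>i\<in>A. s R i) = 0"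
  proof (rule sum.neutral, rule ballI, rule sum.neutral, rule ballI)
    fix R i assume R: "R \<in> {R\<in>P. R - S = {}}" and i: "i \<in> A"
    hence "i \<notin> R" using AE E'_def by auto
    thus "s R i = 0" using sc R unfolding consumption_profile_def P_def by auto
  qed
  have emp: "{} \<notin> P'" unfolding P'_def players_def by auto
  have grp2: "(\<Sum>R\<in>P. \<Sum>i\<in>A. s R i) = (\<Sum>R'\<in>P'. \<Sum>R\<in>{R\<in>P. R - S = R'}. \<Sum>i\<in>A. s R i)"
    using grp zero emp finP' by simp
  have each: "(\<Sum>R\<in>{R\<in>P. R - S = R'}. \<Sum>i\<in>A. s R i) \<le> (\<Sum>i\<in>A. t R' i)" if R': "R' \<in> P'" for R'
  proof (cases "\<exists>R\<in>P. R - S = R' \<and> (\<exists>k\<in>A. s R k > 0)")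
    case False
    have "(\<Sum>R\<in>{R\<in>P. R - S = R'}. \<Sum>i\<in>A. s R i) = 0"
    proof (rule sum.neutral, rule ballI, rule sum.neutral, rule ballI)
      fix R i assume R: "R \<in> {R\<in>P. R - S = R'}" and i: "i \<in> A"
      hence "\<not> s R i > 0" using False by auto
      moreover have "s R i \<ge> 0" using sc R unfolding consumption_profile_def P_def by auto
      ultimately show "s R i = 0" by simp
    qed
    moreover have "(\<Sum>i\<in>A. t R' i) \<ge> 0"
      using tc R' unfolding consumption_profile_def P'_def by (auto intro: sum_nonneg)
    ultimately show ?thesis by simp
  next
    case True
    then obtain R k where R: "R \<in> P" "R - S = R'" and k: "k \<in> A" "s R k > 0" by auto
    have supp: "t R' i = 0" if i: "i \<notin> A" for i
    proof (cases "i \<in> R'")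
      case False thus ?thesis using tc R' unfolding consumption_profile_def P'_def by auto
    next
      case True
      show ?thesis
      proof (rule ccontr)
        assume "t R' i \<noteq> 0"
        moreover have "t R' i \<ge> 0" using tc R' unfolding consumption_profile_def P'_def by auto
        ultimately have pos: "t R' i > 0" by simp
        have kR: "k \<in> R" using k(2) sc R(1) unfolding consumption_profile_def P_def by (metis less_irrefl)
        have kR': "k \<in> R'" using kR k(1) R AE E'_def by auto
        have c1: "cost E' f t i \<le> cost E' f t k" using tn R' True kR' pos by blast
        have c2: "cost E' f t k < cost E f s k" using k unfolding A_def by auto
        have c3: "cost E f s k \<le> cost E f s i" using sn R kR True k by blast
        have "i \<in> E'" using True R' unfolding P'_def players_def by auto
        hence "i \<in> A" using c1 c2 c3 unfolding A_def by auto
        thus False using i by simp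
      qed
    qed
    have tz: "\<forall>i. i \<notin> R' \<longrightarrow> t R' i = 0" using tc R' unfolding consumption_profile_def P'_def by auto
    have finR': "finite R'" using R' fin unfolding P'_def players_def E'_def by (auto intro: finite_subset)
    have "(\<Sum>i\<in>A. t R' i) = (\<Sum>i\<in>R'. t R' i)"
    proof -
      have "(\<Sum>i\<in>A. t R' i) = (\<Sum>i\<in>A \<union> R'. t R' i)"
        by (rule sum.mono_neutral_left) (use finA finR' supp tc R' in \<open>auto simp: consumption_profile_def P'_def\<close>)
      also have "\<dots> = (\<Sum>i\<in>R'. t R' i)"
        by (rule sum.mono_neutral_right) (use finA finR' supp tz in auto)
      finally show ?thesis .
    qed
    also have "\<dots> = mu' R'" using tc R' unfolding consumption_profile_def P'_def by auto
    also have "\<dots> = (\<Sum>R\<in>{R\<in>P. R - S = R'}. mu R)" unfolding mu'_def removed_mass_def P_def by simp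
    finally have eq: "(\<Sum>i\<in>A. t R' i) = (\<Sum>R\<in>{R\<in>P. R - S = R'}. mu R)" .
    have "(\<Sum>i\<in>A. s R i) \<le> mu R" if RP: "R \<in> P" for R
    proof -
      have finR: "finite R" using RP fin unfolding P_def players_def by (auto intro: finite_subset)
      have nn: "\<forall>i. s R i \<ge> 0" and z: "\<forall>i. i \<notin> R \<longrightarrow> s R i = 0" and sm: "(\<Sum>i\<in>R. s R i) = mu R"
        using sc RP unfolding consumption_profile_def P_def by auto
      have "(\<Sum>i\<in>A. s R i) = (\<Sum>i\<in>A \<inter> R. s R i)"
        by (rule sum.mono_neutral_right) (use finA z in auto)
      also have "\<dots> \<le> (\<Sum>i\<in>R. s R i)"
        by (rule sum_mono2) (use finR nn in auto)
      finally show ?thesis using sm by simp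
    qed
    hence "(\<Sum>R\<in>{R\<in>P. R - S = R'}. \<Sum>i\<in>A. s R i) \<le> (\<Sum>R\<in>{R\<in>P. R - S = R'}. mu R)"
      by (intro sum_mono) auto
    thus ?thesis using eq by simp
  qed
  have "(\<Sum>i\<in>A. load E s i) \<le> (\<Sum>i\<in>A. load E' t i)"
    unfolding s_swap t_swap grp2 by (rule sum_mono) (rule each)
  thus False using lt by simp
qed


lemma compact_Pi_UNIV:
  fixes X :: "'a \<Rightarrow> 'b::topological_space set"
  assumes "\<And>i. compact (X i)"
  shows "compact (Pi UNIV X)"
proof -
  have "compactin (product_topology (\<lambda>i. euclidean) UNIV) (PiE UNIV X)"
    using assms by (simp add: compactin_PiE)
  thus ?thesis by (simp add: euclidean_product_topology PiE_UNIV_domain)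
qed

lemma intF:
  fixes g :: "real \<Rightarrow> real"
  assumes c: "continuous_on {0..} g" and m: "mono_on {0..} g" and a: "0 \<le> a" "a \<le> b"
  shows "(b-a)*g a \<le> integral {0..b} g - integral {0..a} g \<and> integral {0..b} g - integral {0..a} g \<le> (b-a) * g b"
proof -
  have ib: "g integrable_on {0..b}"
    by (rule integrable_continuous_interval, rule continuous_on_subset[OF c]) auto
  have iab: "g integrable_on {a..b}"
    by (rule integrable_continuous_interval, rule continuous_on_subset[OF c]) (use a in auto)
  have "integral {0..a} g + integral {a..b} g = integral {0..b} g"
    by (rule Henstock_Kurzweil_Integration.integral_combine[OF a ib])
  hence d: "integral {0..b} g - integral {0..a} g = integral {a..b} g" by simp
  have "integral {a..b} g \<le> integral {a..b} (\<lambda>_. g b)"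
    by (rule integral_le[OF iab]) (use a in \<open>auto intro: mono_onD[OF m]\<close>)
  also have "\<dots> = (b-a) * g b" using a by simp
  finally have u: "integral {a..b} g \<le> (b-a) * g b" .
  have "integral {a..b} (\<lambda>_. g a) \<le> integral {a..b} g"
    by (rule integral_le[OF _ iab]) (use a in \<open>auto intro: mono_onD[OF m]\<close>)
  moreover have "integral {a..b} (\<lambda>_. g a) = (b-a) * g a" using a by simp
  ultimately show ?thesis using d u a by simp
qed


lemma coord_cont: "continuous_on UNIV (\<lambda>s::nat set \<Rightarrow> nat \<Rightarrow> real. s R j)"
  by (rule continuous_on_product_then_coordinatewise[OF continuous_on_product_coordinates])

lemma exists_nash:
  assumes fin: "finite E" and mono: "\<forall>j\<in>E. mono_on {0..} (f j)"
    and cont: "\<forall>j\<in>E. continuous_on {0..} (f j)" and mupos: "\<forall>R\<in>players E. mu R \<ge> 0"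
  shows "\<exists>s. nash E f mu s"
proof -
  define P where "P = players E"
  have finP: "finite P" using fin players_finite P_def by auto
  have PE: "R \<subseteq> E" "R \<noteq> {}" if "R \<in> P" for R using that unfolding P_def players_def by auto
  have finR: "finite R" if "R \<in> P" for R using PE[OF that] fin by (auto intro: finite_subset)
  define M where "M = (\<Sum>R\<in>P. mu R)"
  define B where "B R j = (if R \<in> P \<and> j \<in> R then {0..mu R} else {0::real})" for R j
  define K where "K = Pi UNIV (\<lambda>R. Pi UNIV (B R)) \<inter> (\<Inter>R\<in>P. {s. (\<Sum>j\<in>R. s R j) = mu R})"
  define F where "F j x = integral {0..x} (f j)" for j x
  define Phi where "Phi s = (\<Sum>j\<in>E. F j (load E s j))" for s
  have Kmem: "s \<in> K \<longleftrightarrow> (\<forall>R j. s R j \<in> B R j) \<and> (\<forall>R\<in>P. (\<Sum>j\<in>R. s R j) = mu R)" for s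
    unfolding K_def by auto
  have compK: "compact K"
  proof -
    have "compact (Pi UNIV (\<lambda>R. Pi UNIV (B R)))"
      by (intro compact_Pi_UNIV) (auto simp: B_def)
    moreover have "closed (\<Inter>R\<in>P. {s::nat set \<Rightarrow> nat \<Rightarrow> real. (\<Sum>j\<in>R. s R j) = mu R})"
      by (intro closed_INT ballI closed_Collect_eq continuous_on_sum continuous_on_const coord_cont)
    ultimately show ?thesis unfolding K_def by (rule compact_Int_closed)
  qed
  define s0 where "s0 R j = (if R \<in> P \<and> j = (SOME x. x \<in> R) then mu R else 0)" for R j
  have s0K: "s0 \<in> K"
  proof -
    have "s0 R j \<in> B R j" for R j
    proof (cases "R \<in> P \<and> j = (SOME x. x \<in> R)")
      case True
      hence "j \<in> R" using PE(2) by (metis some_in_eq)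
      thus ?thesis using True mupos unfolding s0_def B_def P_def by auto
    next
      case False thus ?thesis unfolding s0_def B_def using mupos by (auto simp: P_def)
    qed
    moreover have "(\<Sum>j\<in>R. s0 R j) = mu R" if "R \<in> P" for R
    proof -
      have "(SOME x. x \<in> R) \<in> R" using PE(2)[OF that] by (metis some_in_eq)
      thus ?thesis using that finR[OF that] unfolding s0_def by (simp add: sum.delta')
    qed
    ultimately show ?thesis unfolding Kmem by auto
  qed
  have Kcp: "consumption_profile E mu s" if "s \<in> K" for s
  proof -
    have b: "s R j \<in> B R j" for R j using that Kmem by auto
    show ?thesis unfolding consumption_profile_def
    proof (intro ballI conjI allI impI)
      fix R j assume R: "R \<in> players E"
      show "0 \<le> s R j" using b[of R j] R mupos unfolding B_def P_def by (auto split: if_splits)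
      show "j \<notin> R \<Longrightarrow> s R j = 0" using b[of R j] unfolding B_def by auto
      show "(\<Sum>j\<in>R. s R j) = mu R" using that R Kmem P_def by auto
    qed
  qed
  have loadb: "load E s j \<in> {0..M}" if "s \<in> K" for s j
  proof -
    have "load E s j \<le> M" unfolding load_def M_def P_def[symmetric]
    proof (rule sum_mono)
      fix R assume R: "R \<in> P"
      have b: "s R j \<in> B R j" using that Kmem by auto
      show "s R j \<le> mu R"
      proof (cases "j \<in> R")
        case True thus ?thesis using b R unfolding B_def by auto
      next
        case False thus ?thesis using b R mupos unfolding B_def P_def by auto
      qed
    qed
    thus ?thesis using load_nonneg[OF Kcp[OF that]] by auto
  qed
  have contPhi: "continuous_on K Phi"
    unfolding Phi_def
  proof (intro continuous_on_sum)
    fix j assume j: "j \<in> E"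
    have cl: "continuous_on K (\<lambda>s. load E s j)"
      unfolding load_def by (intro continuous_on_sum continuous_on_subset[OF coord_cont]) auto
    have cF: "continuous_on {0..M} (F j)"
      unfolding F_def
      by (rule indefinite_integral_continuous_1, rule integrable_continuous_interval,
          rule continuous_on_subset[OF cont[rule_format, OF j]]) auto
    show "continuous_on K (\<lambda>s. F j (load E s j))"
      by (rule continuous_on_compose2[OF cF cl]) (use loadb in auto)
  qed
  obtain s where sK: "s \<in> K" and smin: "\<forall>y\<in>K. Phi s \<le> Phi y"
    using continuous_attains_inf[OF compK _ contPhi] s0K by blast
  have scp: "consumption_profile E mu s" using Kcp[OF sK] .
  have "nash E f mu s"
    unfolding nash_def
  proof (intro conjI scp ballI impI)
    fix R k i assume R: "R \<in> players E" and k: "k \<in> R" and i: "i \<in> R" and pos: "0 < s R k"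
    show "cost E f s k \<le> cost E f s i"
    proof (rule ccontr)
      assume "\<not> ?thesis"
      hence gt: "f i (load E s i) < f k (load E s k)" unfolding cost_def by simp
      have RP: "R \<in> P" using R P_def by simp
      have ki: "k \<noteq> i" using gt by auto
      have kE: "k \<in> E" and iE: "i \<in> E" using PE[OF RP] k i by auto
      define Lk where "Lk = load E s k"
      define Li where "Li = load E s i"
      have Lk0: "Lk \<ge> 0" and Li0: "Li \<ge> 0" using loadb[OF sK] Lk_def Li_def by auto
      define e where "e = (f k Lk - f i Li) / 2"
      have e: "e > 0" using gt e_def Lk_def Li_def by simp
      obtain dk where dk: "dk > 0" "\<forall>x\<in>{0..}. dist x Lk < dk \<longrightarrow> dist (f k x) (f k Lk) < e"
        using cont[rule_format, OF kE] Lk0 e unfolding continuous_on_iff by (metis atLeast_iff)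
      obtain di where di: "di > 0" "\<forall>x\<in>{0..}. dist x Li < di \<longrightarrow> dist (f i x) (f i Li) < e"
        using cont[rule_format, OF iE] Li0 e unfolding continuous_on_iff by (metis atLeast_iff)
      define t where "t = min (s R k) (min dk di / 2)"
      have t0: "t > 0" using pos dk di t_def by simp
      have tsk: "t \<le> s R k" using t_def by simp
      have tdk: "t < dk" and tdi: "t < di" using t_def dk di by auto
      have sRnn: "\<forall>j. s R j \<ge> 0" and sRsum: "(\<Sum>j\<in>R. s R j) = mu R"
        using scp R unfolding consumption_profile_def by auto
      have skLk: "s R k \<le> Lk" unfolding Lk_def load_def
        using member_le_sum[of R P "\<lambda>R. s R k"] RP finP scp
        unfolding P_def consumption_profile_def by auto
      have pair: "s R k + s R i \<le> mu R"
      proof -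
        have "(\<Sum>j\<in>{k,i}. s R j) \<le> (\<Sum>j\<in>R. s R j)"
          by (rule sum_mono2[OF finR[OF RP]]) (use k i sRnn in auto)
        thus ?thesis using ki sRsum by simp
      qed
      have fk: "f k (Lk - t) > f k Lk - e"
        using dk(2)[rule_format, of "Lk - t"] tsk skLk tdk t0 by (auto simp: dist_real_def)
      have fi: "f i (Li + t) < f i Li + e"
        using di(2)[rule_format, of "Li + t"] Li0 tdi t0 by (auto simp: dist_real_def)
      have fcomp: "f i (Li + t) < f k (Lk - t)" using fk fi e_def by (simp add: field_simps)
      define s2 where "s2 R' x = s R' x + (if R' = R \<and> x = i then t else 0) - (if R' = R \<and> x = k then t else 0)" for R' x
      have s2K: "s2 \<in> K" unfolding Kmem
      proof (intro conjI allI ballI)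
        fix R' x
        have b: "s R' x \<in> B R' x" using sK Kmem by auto
        show "s2 R' x \<in> B R' x"
        proof (cases "R' = R \<and> (x = i \<or> x = k)")
          case True
          hence "B R' x = {0..mu R}" using RP k i unfolding B_def by auto
          thus ?thesis using True ki pair tsk t0 sRnn[rule_format, of i] sRnn[rule_format, of k] unfolding s2_def by auto
        next
          case False thus ?thesis using b unfolding s2_def by auto
        qed
      next
        fix R' assume R': "R' \<in> P"
        have "(\<Sum>x\<in>R'. s2 R' x) = (\<Sum>x\<in>R'. s R' x) + (\<Sum>x\<in>R'. (if R' = R \<and> x = i then t else 0))
              - (\<Sum>x\<in>R'. (if R' = R \<and> x = k then t else 0))"
          unfolding s2_def by (simp add: sum.distrib sum_subtractf)
        also have "\<dots> = (\<Sum>x\<in>R'. s R' x)"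
          using finR[OF R'] i k by (cases "R' = R") (auto simp: sum.delta')
        also have "\<dots> = mu R'" using sK Kmem R' by auto
        finally show "(\<Sum>x\<in>R'. s2 R' x) = mu R'" .
      qed
      have load2: "load E s2 x = load E s x + (if x = i then t else 0) - (if x = k then t else 0)" for x
      proof -
        have "load E s2 x = load E s x + (\<Sum>R'\<in>P. (if R' = R \<and> x = i then t else 0))
              - (\<Sum>R'\<in>P. (if R' = R \<and> x = k then t else 0))"
          unfolding load_def s2_def P_def[symmetric] by (simp add: sum.distrib sum_subtractf)
        also have "\<dots> = load E s x + (if x = i then t else 0) - (if x = k then t else 0)"
          using finP RP by (auto simp: sum.delta')
        finally show ?thesis .
      qed
      define g where "g x = F x (load E s2 x) - F x (load E s x)" for x
      have gsum: "Phi s2 - Phi s = (\<Sum>x\<in>E. g x)" unfolding Phi_def g_def by (simp add: sum_subtractf)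
      have gx: "g x = (if x = i then g i else 0) + (if x = k then g k else 0)" for x
        using ki load2 unfolding g_def by auto
      have "(\<Sum>x\<in>E. g x) = (\<Sum>x\<in>E. (if x = i then g i else 0) + (if x = k then g k else 0))"
        by (rule sum.cong[OF refl]) (rule gx)
      also have "\<dots> = g i + g k" using fin iE kE by (simp add: sum.distrib sum.delta')
      finally have gs: "(\<Sum>x\<in>E. g x) = g i + g k" .
      have gi: "g i \<le> t * f i (Li + t)"
      proof -
        have "g i = F i (Li + t) - F i Li" unfolding g_def using load2[of i] ki Li_def by simp
        thus ?thesis using intF[OF cont[rule_format, OF iE] mono[rule_format, OF iE], of Li "Li + t"]
          Li0 t0 unfolding F_def by simp
      qed
      have gk: "g k \<le> - (t * f k (Lk - t))"
      proof -
        have "g k = F k (Lk - t) - F k Lk" unfolding g_def using load2[of k] ki Lk_def by simp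
        thus ?thesis using intF[OF cont[rule_format, OF kE] mono[rule_format, OF kE], of "Lk - t" Lk]
          skLk tsk t0 unfolding F_def by simp
      qed
      have "t * f i (Li + t) < t * f k (Lk - t)" using fcomp t0 by simp
      hence "Phi s2 < Phi s" using gsum gs gi gk by linarith
      thus False using smin s2K by fastforce
    qed
  qed
  thus ?thesis by blast
qed


lemma nash_cong:
  assumes "\<forall>R\<in>players E. mu R = mu2 R"
  shows "nash E f mu s = nash E f mu2 s"
  using assms unfolding nash_def consumption_profile_def by auto

lemma uniq:
  assumes fin: "finite E" and mono: "\<forall>j\<in>E. mono_on {0..} (f j)"
    and s: "nash E f mu s" and t: "nash E f mu t" and j: "j \<in> E"
  shows "cost E f s j \<le> cost E f t j"
proof -
  have "\<forall>R\<in>players E. mu R = removed_mass E {} mu R"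
  proof
    fix R assume R: "R \<in> players E"
    have "{R0 \<in> players E. R0 - {} = R} = {R}" using R by auto
    thus "mu R = removed_mass E {} mu R" unfolding removed_mass_def by simp
  qed
  hence t': "nash (E - {}) f (removed_mass E {} mu) t" using nash_cong[of E mu "removed_mass E {} mu" f t] t by simp
  show ?thesis using key[OF fin mono s t'] j by simp
qed

lemma eq_cost_is:
  assumes fin: "finite E" and mono: "\<forall>j\<in>E. mono_on {0..} (f j)"
    and s: "nash E f mu s" and j: "j \<in> E"
  shows "eq_cost E f mu j = cost E f s j"
  unfolding eq_cost_def
proof (rule the_equality)
  show "\<exists>s'. nash E f mu s' \<and> cost E f s j = cost E f s' j" using s by blast
next
  fix c assume "\<exists>s'. nash E f mu s' \<and> c = cost E f s' j"
  then obtain s' where "nash E f mu s'" "c = cost E f s' j" by blast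
  thus "c = cost E f s j" using uniq[OF fin mono s] uniq[OF fin mono _ s] j by (meson order_antisym)
qed

theorem mainTheorem19:
  fixes n :: nat and f :: "nat \<Rightarrow> real \<Rightarrow> real" and mu :: "nat set \<Rightarrow> real" and S :: "nat set"
  assumes "is_game {1..n} f mu"
    and "\<forall>j\<in>{1..n}. continuous_on {0..} (f j)"
    and "S \<subseteq> {1..n}"
    and "j \<in> {1..n} - S"
  shows "eq_cost ({1..n} - S) f (removed_mass {1..n} S mu) j \<ge> eq_cost {1..n} f mu j"
proof -
  define E where "E = {1..n::nat}"
  have fin: "finite E" and mono: "\<forall>j\<in>E. mono_on {0..} (f j)" and mup: "\<forall>R\<in>players E. mu R \<ge> 0"
    using assms(1) unfolding is_game_def E_def by auto
  have cont: "\<forall>j\<in>E. continuous_on {0..} (f j)" using assms(2) E_def by simp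
  obtain s where s: "nash E f mu s" using exists_nash[OF fin mono cont mup] by blast
  have fin': "finite (E - S)" using fin by simp
  have mono': "\<forall>j\<in>E - S. mono_on {0..} (f j)" using mono by simp
  have cont': "\<forall>j\<in>E - S. continuous_on {0..} (f j)" using cont by simp
  have mup': "\<forall>R\<in>players (E - S). removed_mass E S mu R \<ge> 0"
    unfolding removed_mass_def using mup by (auto intro: sum_nonneg)
  obtain t where t: "nash (E - S) f (removed_mass E S mu) t" using exists_nash[OF fin' mono' cont' mup'] by blast
  have jE: "j \<in> E - S" using assms(4) E_def by simp
  have "eq_cost E f mu j = cost E f s j" using eq_cost_is[OF fin mono s] jE by simp
  moreover have "eq_cost (E - S) f (removed_mass E S mu) j = cost (E - S) f t j"
    using eq_cost_is[OF fin' mono' t] jE by simp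
  ultimately show ?thesis using key[OF fin mono s t jE] unfolding E_def by simp
qed

end
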